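(* Let $d_1,d_2\ge1$. Consider the gate $\Gamma_C$ with vertices $v_{i,j}$ ($i\in[d_1]$, $j\in[d_2]$), each with signature $\mathtt{PASS}$ (incident edges ordered north, east, south, west), where $v_{i,j}$'s east edge is $v_{i,j+1}$'s west edge and $v_{i,j}$'s south edge is $v_{i+1,j}$'s north edge; its dangling edges form four groups $x_1=(x_{1,1},\dots,x_{1,d_1})$, $x_2=(x_{2,1},\dots,x_{2,d_2})$, $y_1\in\{0,1\}^{d_1}$, $y_2\in\{0,1\}^{d_2}$, where $x_{1,i}$ is the west edge of $v_{i,1}$, the east edge of $v_{i,d_2}$ is the $(d_1+1-i)$-th edge of $y_1$, $x_{2,j}$ is the north edge of $v_{1,j}$, and the south edge of $v_{d_1,j}$ is the $(d_2+1-j)$-th edge of $y_2$. Then $$\mathrm{Sig}(\Gamma_C)(x_1,x_2,y_1,y_2)=C(x_1,x_2,y_1,y_2):=(-1)^{\mathtt{ODD}(x_1)\mathtt{ODD}(x_2)}[y_1=x_1^{-1}][y_2=x_2^{-1}],$$ and the grid cap function $O(x_1,x_2,y_1,y_2):=[y_1=x_1^{-1}][y_2=x_2^{-1}]$ satisfies, for all arguments, $$O=\tfrac12\big(1+(-1)^{\mathtt{ODD}(x_1)}+(-1)^{\mathtt{ODD}(x_2)}-(-1)^{\mathtt{ODD}(x_1)+\mathtt{ODD}(x_2)}\big)\cdot C.$$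
   Context: $\mathtt{PASS}(1111)=-1$, $\mathtt{PASS}(0000)=\mathtt{PASS}(0101)=\mathtt{PASS}(1010)=1$, $\mathtt{PASS}=0$ otherwise (bits ordered north, east, south, west). $\mathtt{ODD}(x)$ is the Hamming weight of $x$ mod $2$. For a string $x=x_1\cdots x_d$, $x^{-1}=x_d\cdots x_1$ is its reversal. $[\varphi]$ is $1$ if $\varphi$ holds and $0$ otherwise. The signature of a gate $\Gamma$ with dangling edge set $D$ is $\mathrm{Sig}(\Gamma,x)=\sum_{y\in\{0,1\}^{E(\Gamma)\setminus D}}w_\Gamma(xy)\prod_v f_v((xy)|_{I(v)})$, with $w_\Gamma(z)$ the product of the weights of active edges (here all weights are $1$). *)

theory Defs
  imports Main "HOL-Library.FuncSet" Complex_Main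
begin

text \<open>Bits are booleans (True = 1). Signature PASS with arguments ordered north, east, south, west.\<close>
definition PASS :: "bool \<Rightarrow> bool \<Rightarrow> bool \<Rightarrow> bool \<Rightarrow> real" where
  "PASS n e s w =
     (if n \<and> e \<and> s \<and> w then -1
      else if (\<not>n \<and> \<not>e \<and> \<not>s \<and> \<not>w) \<or> (\<not>n \<and> e \<and> \<not>s \<and> w) \<or> (n \<and> \<not>e \<and> s \<and> \<not>w) then 1
      else 0)"

definition ODD :: "bool list \<Rightarrow> nat" where
  "ODD xs = length (filter id xs) mod 2"

definition iverson :: "bool \<Rightarrow> real" where
  "iverson P = (if P then 1 else 0)"

text \<open>Value of the horizontal edge between columns j and j+1 in row i (1 \<le> i \<le> d1, 0 \<le> j \<le> d2):
  column 0 side is the west dangling edge x1_i, column d2 side is the east dangling edge,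
  which is the (d1+1-i)-th entry of y1; otherwise the internal edge variable H(i,j).\<close>
definition hor_edge :: "nat \<Rightarrow> nat \<Rightarrow> bool list \<Rightarrow> bool list \<Rightarrow> (nat \<times> nat \<Rightarrow> bool) \<Rightarrow> nat \<Rightarrow> nat \<Rightarrow> bool" where
  "hor_edge d1 d2 x1 y1 H i j =
     (if j = 0 then x1 ! (i - 1) else if j = d2 then y1 ! (d1 - i) else H (i, j))"

text \<open>Value of the vertical edge between rows i and i+1 in column j (0 \<le> i \<le> d1, 1 \<le> j \<le> d2).\<close>
definition ver_edge :: "nat \<Rightarrow> nat \<Rightarrow> bool list \<Rightarrow> bool list \<Rightarrow> (nat \<times> nat \<Rightarrow> bool) \<Rightarrow> nat \<Rightarrow> nat \<Rightarrow> bool" where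
  "ver_edge d1 d2 x2 y2 V i j =
     (if i = 0 then x2 ! (j - 1) else if i = d1 then y2 ! (d2 - j) else V (i, j))"

definition Sig_grid :: "nat \<Rightarrow> nat \<Rightarrow> bool list \<Rightarrow> bool list \<Rightarrow> bool list \<Rightarrow> bool list \<Rightarrow> real" where
  "Sig_grid d1 d2 x1 x2 y1 y2 =
     (\<Sum>(H, V) \<in> (({1..d1} \<times> {1..<d2}) \<rightarrow>\<^sub>E (UNIV :: bool set)) \<times> (({1..<d1} \<times> {1..d2}) \<rightarrow>\<^sub>E (UNIV :: bool set)).
        \<Prod>(i, j) \<in> {1..d1} \<times> {1..d2}.
          PASS (ver_edge d1 d2 x2 y2 V (i - 1) j)
               (hor_edge d1 d2 x1 y1 H i j)
               (ver_edge d1 d2 x2 y2 V i j)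
               (hor_edge d1 d2 x1 y1 H i (j - 1)))"

definition C_fun :: "bool list \<Rightarrow> bool list \<Rightarrow> bool list \<Rightarrow> bool list \<Rightarrow> real" where
  "C_fun x1 x2 y1 y2 = (-1) ^ (ODD x1 * ODD x2) * iverson (y1 = rev x1) * iverson (y2 = rev x2)"

definition O_fun :: "bool list \<Rightarrow> bool list \<Rightarrow> bool list \<Rightarrow> bool list \<Rightarrow> real" where
  "O_fun x1 x2 y1 y2 = iverson (y1 = rev x1) * iverson (y2 = rev x2)"

end

theory Submission
  imports Defs
begin

lemma PASS_nz: "PASS n e s w \<noteq> 0 \<Longrightarrow> n = s \<and> e = w"
  by (auto simp: PASS_def split: if_splits)

lemma PASS_diag: "PASS v h v h = (if v \<and> h then -1 else 1)"
  by (auto simp: PASS_def)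

lemma chain_nat: fixes f :: "nat \<Rightarrow> 'a" and j d :: nat assumes "\<forall>j\<in>{1..d}. f j = f (j-1)" shows "j \<le> d \<Longrightarrow> f j = f 0"
proof (induction j)
  case (Suc j)
  then show ?case using assms by (metis Suc_leD atLeastAtMost_iff diff_Suc_1 le_add1 plus_1_eq_Suc)
qed simp

lemma prod_bits: "(\<Prod>k\<in>{1..length xs}. (if xs ! (k-1) then a else 1)) = (a::real) ^ length (filter id xs)"
proof (induction xs rule: rev_induct)
  case Nil then show ?case by simp
next
  case (snoc x xs)
  have "(\<Prod>k\<in>{1..length xs}. (if (xs@[x]) ! (k-1) then a else 1)) =
        (\<Prod>k\<in>{1..length xs}. (if xs ! (k-1) then a else 1))"
    by (rule prod.cong) (auto simp: nth_append)
  then show ?case using snoc by (simp add: prod.cl_ivl_Suc nth_append)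
qed

lemma neg1_pow: "(-1::real) ^ (a * b) = (-1) ^ ((a mod 2) * (b mod 2))"
  by (simp add: minus_one_power_iff even_mult_iff)

theorem mainTheorem9:
  fixes d1 d2 :: nat and x1 x2 y1 y2 :: "bool list"
  assumes "d1 \<ge> 1" and "d2 \<ge> 1"
    and "length x1 = d1" and "length y1 = d1" and "length x2 = d2" and "length y2 = d2"
  shows "Sig_grid d1 d2 x1 x2 y1 y2 = C_fun x1 x2 y1 y2 \<and>
    (\<forall>a1 a2 b1 b2. length a1 = d1 \<longrightarrow> length b1 = d1 \<longrightarrow> length a2 = d2 \<longrightarrow> length b2 = d2 \<longrightarrow>
       O_fun a1 a2 b1 b2 =
         (1/2) * (1 + (-1) ^ ODD a1 + (-1) ^ ODD a2 - (-1) ^ (ODD a1 + ODD a2)) * C_fun a1 a2 b1 b2)"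
proof
  note A = assms
  define DH where "DH = ({1..d1} \<times> {1..<d2}) \<rightarrow>\<^sub>E (UNIV :: bool set)"
  define DV where "DV = ({1..<d1} \<times> {1..d2}) \<rightarrow>\<^sub>E (UNIV :: bool set)"
  define F where "F = (\<lambda>(H, V). \<Prod>(i, j) \<in> {1..d1} \<times> {1..d2}.
          PASS (ver_edge d1 d2 x2 y2 V (i - 1) j)
               (hor_edge d1 d2 x1 y1 H i j)
               (ver_edge d1 d2 x2 y2 V i j)
               (hor_edge d1 d2 x1 y1 H i (j - 1)))"
  define H0 where "H0 = (\<lambda>(i,j)\<in>{1..d1} \<times> {1..<d2}. x1 ! (i-1))"
  define V0 where "V0 = (\<lambda>(i,j)\<in>{1..<d1} \<times> {1..d2}. x2 ! (j-1))"
  have S: "Sig_grid d1 d2 x1 x2 y1 y2 = sum F (DH \<times> DV)"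
    unfolding Sig_grid_def F_def DH_def DV_def by simp
  have fin: "finite (DH \<times> DV)" unfolding DH_def DV_def by (auto intro!: finite_PiE)
  have H0D: "(H0, V0) \<in> DH \<times> DV" unfolding DH_def DV_def H0_def V0_def by auto
  have nz: "H = H0 \<and> V = V0 \<and> y1 = rev x1 \<and> y2 = rev x2"
    if HV: "(H, V) \<in> DH \<times> DV" and F0: "F (H, V) \<noteq> 0" for H V
  proof -
    have fac: "ver_edge d1 d2 x2 y2 V (i - 1) j = ver_edge d1 d2 x2 y2 V i j \<and>
               hor_edge d1 d2 x1 y1 H i j = hor_edge d1 d2 x1 y1 H i (j - 1)"
      if "i \<in> {1..d1}" "j \<in> {1..d2}" for i j
    proof -
      have "(\<Prod>(i, j) \<in> {1..d1} \<times> {1..d2}.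
          PASS (ver_edge d1 d2 x2 y2 V (i - 1) j)
               (hor_edge d1 d2 x1 y1 H i j)
               (ver_edge d1 d2 x2 y2 V i j)
               (hor_edge d1 d2 x1 y1 H i (j - 1))) \<noteq> 0" using F0 by (simp add: F_def)
      then have "PASS (ver_edge d1 d2 x2 y2 V (i - 1) j)
               (hor_edge d1 d2 x1 y1 H i j)
               (ver_edge d1 d2 x2 y2 V i j)
               (hor_edge d1 d2 x1 y1 H i (j - 1)) \<noteq> 0"
        using that by (subst (asm) prod_zero_iff) auto
      then show ?thesis using PASS_nz by blast
    qed
    have hc: "hor_edge d1 d2 x1 y1 H i j = x1 ! (i-1)" if "i \<in> {1..d1}" "j \<le> d2" for i j
    proof -
      have "hor_edge d1 d2 x1 y1 H i j = hor_edge d1 d2 x1 y1 H i 0"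
        by (rule chain_nat[where f="hor_edge d1 d2 x1 y1 H i" and d=d2]) (use fac that in auto)
      then show ?thesis by (simp add: hor_edge_def)
    qed
    have vc: "ver_edge d1 d2 x2 y2 V i j = x2 ! (j-1)" if "j \<in> {1..d2}" "i \<le> d1" for i j
    proof -
      have "ver_edge d1 d2 x2 y2 V i j = ver_edge d1 d2 x2 y2 V 0 j"
        by (rule chain_nat[where f="\<lambda>i. ver_edge d1 d2 x2 y2 V i j" and d=d1]) (use fac that in auto)
      then show ?thesis by (simp add: ver_edge_def)
    qed
    have HD: "H \<in> DH" and VD: "V \<in> DV" using HV by auto
    have "H = H0"
    proof
      fix p :: "nat \<times> nat" obtain i j where p: "p = (i,j)" by force
      show "H p = H0 p"
      proof (cases "p \<in> {1..d1} \<times> {1..<d2}")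
        case True
        then have "hor_edge d1 d2 x1 y1 H i j = x1 ! (i-1)" using hc p by auto
        then show ?thesis using True p by (auto simp: hor_edge_def H0_def)
      next
        case False
        then show ?thesis using HD PiE_arb[of H _ _ p] by (simp add: DH_def H0_def)
      qed
    qed
    moreover have "V = V0"
    proof
      fix p :: "nat \<times> nat" obtain i j where p: "p = (i,j)" by force
      show "V p = V0 p"
      proof (cases "p \<in> {1..<d1} \<times> {1..d2}")
        case True
        then have "ver_edge d1 d2 x2 y2 V i j = x2 ! (j-1)" using vc p by auto
        then show ?thesis using True p by (auto simp: ver_edge_def V0_def)
      next
        case False
        then show ?thesis using VD PiE_arb[of V _ _ p] by (simp add: DV_def V0_def)
      qed
    qed
    moreover have "y1 = rev x1"
    proof (rule nth_equalityI)
      show "length y1 = length (rev x1)" using A by simp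
      fix k assume k: "k < length y1"
      have "hor_edge d1 d2 x1 y1 H (d1 - k) d2 = x1 ! (d1 - k - 1)" using hc[of "d1-k" d2] k A by auto
      then show "y1 ! k = rev x1 ! k" using k A by (simp add: hor_edge_def rev_nth)
    qed
    moreover have "y2 = rev x2"
    proof (rule nth_equalityI)
      show "length y2 = length (rev x2)" using A by simp
      fix k assume k: "k < length y2"
      have "ver_edge d1 d2 x2 y2 V d1 (d2 - k) = x2 ! (d2 - k - 1)" using vc[of "d2-k" d1] k A by auto
      then show "y2 ! k = rev x2 ! k" using k A by (simp add: ver_edge_def rev_nth)
    qed
    ultimately show ?thesis by blast
  qed
  show "Sig_grid d1 d2 x1 x2 y1 y2 = C_fun x1 x2 y1 y2"
  proof (cases "y1 = rev x1 \<and> y2 = rev x2")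
    case False
    have "sum F (DH \<times> DV) = 0"
      by (rule sum.neutral) (use nz False in fastforce)
    then show ?thesis using S False by (auto simp: C_fun_def iverson_def)
  next
    case True
    have "sum F (DH \<times> DV) = sum F {(H0, V0)}"
    proof (rule sum.mono_neutral_right[OF fin])
      show "{(H0, V0)} \<subseteq> DH \<times> DV" using H0D by simp
      show "\<forall>p\<in>DH \<times> DV - {(H0, V0)}. F p = 0"
      proof
        fix p assume p: "p \<in> DH \<times> DV - {(H0, V0)}"
        obtain H V where pv: "p = (H, V)" by force
        show "F p = 0"
        proof (rule ccontr)
          assume "F p \<noteq> 0"
          then have "H = H0 \<and> V = V0" using nz[of H V] p pv by blast
          then show False using p pv by simp
        qed
      qed
    qed
    also have "\<dots> = F (H0, V0)" by simp
    also have "\<dots> = (\<Prod>(i, j) \<in> {1..d1} \<times> {1..d2}. (if x1 ! (i-1) then (if x2 ! (j-1) then -1 else 1) else 1))"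
      unfolding F_def
    proof (simp only: prod.case, rule prod.cong[OF refl])
      fix p assume p: "p \<in> {1..d1} \<times> {1..d2}"
      obtain i j where ij: "p = (i,j)" by force
      have h1: "hor_edge d1 d2 x1 y1 H0 i j = x1 ! (i-1)" using p ij True A
        by (auto simp: hor_edge_def H0_def rev_nth)
      have h2: "hor_edge d1 d2 x1 y1 H0 i (j-1) = x1 ! (i-1)" using p ij True A
        by (auto simp: hor_edge_def H0_def rev_nth)
      have v1: "ver_edge d1 d2 x2 y2 V0 i j = x2 ! (j-1)" using p ij True A
        by (auto simp: ver_edge_def V0_def rev_nth)
      have v2: "ver_edge d1 d2 x2 y2 V0 (i-1) j = x2 ! (j-1)" using p ij True A
        by (auto simp: ver_edge_def V0_def rev_nth)
      show "(case p of (i, j) \<Rightarrow> PASS (ver_edge d1 d2 x2 y2 V0 (i - 1) j) (hor_edge d1 d2 x1 y1 H0 i j)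
                (ver_edge d1 d2 x2 y2 V0 i j) (hor_edge d1 d2 x1 y1 H0 i (j - 1))) =
            (case p of (i, j) \<Rightarrow> (if x1 ! (i-1) then (if x2 ! (j-1) then -1 else 1) else 1))"
        using ij h1 h2 v1 v2 by (auto simp: PASS_diag)
    qed
    also have "\<dots> = (\<Prod>i\<in>{1..d1}. \<Prod>j\<in>{1..d2}. (if x1 ! (i-1) then (if x2 ! (j-1) then -1 else 1) else 1))"
      by (rule prod.cartesian_product[symmetric])
    also have "\<dots> = (\<Prod>i\<in>{1..d1}. (if x1 ! (i-1) then (-1) ^ length (filter id x2) else 1))"
      using prod_bits[of x2 "-1"] A by (auto intro!: prod.cong)
    also have "\<dots> = ((-1) ^ length (filter id x2)) ^ length (filter id x1)"
      using prod_bits[of x1 "(-1) ^ length (filter id x2)"] A by simp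
    also have "\<dots> = (-1) ^ (ODD x1 * ODD x2)"
      unfolding ODD_def by (metis neg1_pow power_mult mult.commute)
    finally show ?thesis using S True by (simp add: C_fun_def iverson_def)
  qed
next
  show "\<forall>a1 a2 b1 b2. length a1 = d1 \<longrightarrow> length b1 = d1 \<longrightarrow> length a2 = d2 \<longrightarrow> length b2 = d2 \<longrightarrow>
       O_fun a1 a2 b1 b2 =
         (1/2) * (1 + (-1) ^ ODD a1 + (-1) ^ ODD a2 - (-1) ^ (ODD a1 + ODD a2)) * C_fun a1 a2 b1 b2"
  proof (intro allI impI)
    fix a1 a2 b1 b2 :: "bool list"
    have o1: "ODD a1 = 0 \<or> ODD a1 = 1" and o2: "ODD a2 = 0 \<or> ODD a2 = 1" unfolding ODD_def by auto
    show "O_fun a1 a2 b1 b2 =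
         (1/2) * (1 + (-1) ^ ODD a1 + (-1) ^ ODD a2 - (-1) ^ (ODD a1 + ODD a2)) * C_fun a1 a2 b1 b2"
      using o1 o2 by (auto simp: O_fun_def C_fun_def iverson_def)
  qed
qed

end
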